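(* Let $r\in[0,\pi/2)$ and suppose $\mathscr A^r$ is invariant for (TVKR). For $i\ne j$ define $c^r_{ij}(t)=[a_{ij}(t)+a_{ji}(t)]\cos r$ if $a_{ij}(t)+a_{ji}(t)>0$ and $c^r_{ij}(t)=a_{ij}(t)+a_{ji}(t)$ otherwise; and $\tilde a^r_{ik}(t)=a_{ik}(t)\cos r$ if $a_{ik}(t)>0$ and $\tilde a^r_{ik}(t)=a_{ik}(t)$ otherwise. Define $$\xi(L(t),r)=-\min_{i\ne j}\Big\{c^r_{ij}(t)+\sum_{k\ne i,j}\min\big(\tilde a^r_{ik}(t),\tilde a^r_{jk}(t)\big)\Big\}.$$ If there exist $T>0$ and $\eta>0$ such that $\frac1T\int_t^{t+T}\xi(L(s),r)\,ds\le-\eta$ for all $t\ge 0$, then the PD trajectories of (TVKR) are exponentially asymptotically stable within $\mathscr A^r$.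
   Context: Consider $m\ge 2$ phase oscillators $\theta=(\theta_1,\dots,\theta_m)\in\mathbb R^m$ governed by (TVKR): $\dot\theta_i=\omega_i(t)+\sum_{j=1}^m a_{ij}(t)\sin(\theta_j-\theta_i)$, $i=1,\dots,m$, where $\omega_i$ and $a_{ij}$ are real-valued, piecewise continuous, bounded functions of $t\ge 0$ with $a_{ii}\equiv 0$; the $a_{ij}$ may be negative. $L(t)$ denotes the Laplacian with $l_{ij}=-a_{ij}$ ($i\ne j$), $l_{ii}=\sum_{j\ne i}a_{ij}$. Write $\theta_{ij}=\theta_i-\theta_j$. For $r\in[0,\pi/2)$, $\mathscr A^{r}=\{(\theta_{ij})_{i>j}: |\theta_{ij}|\le r \text{ for all } i>j\}$; $\mathscr A^r$ is invariant for (TVKR) if every solution whose phase differences lie in $\mathscr A^r$ at $t=0$ has phase differences in $\mathscr A^r$ for all $t\ge0$. The PD trajectories are exponentially asymptotically stable within $\mathscr A^r$ if there exist constants $M,T_0,\epsilon>0$ such that for any two solutions $\phi,\theta$ of (TVKR) whose initial phase differences lie in $\mathscr A^r$, $|\phi_{ij}(t)-\theta_{ij}(t)|\le M\max_{k,l}|\phi_{kl}(0)-\theta_{kl}(0)|e^{-\epsilon t}$ for all $t\ge T_0$ and all $i,j$. *)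

theory Defs
  imports "HOL-Analysis.Analysis"
begin

text \<open>Oscillators are indexed by a finite type 'n (m = CARD('n)); time is real, only t \<ge> 0 matters.
  omega :: 'n \<Rightarrow> real \<Rightarrow> real, a :: 'n \<Rightarrow> 'n \<Rightarrow> real \<Rightarrow> real (a i j t = a_ij(t)),
  a phase vector trajectory is theta :: real \<Rightarrow> 'n \<Rightarrow> real.\<close>

definition piecewise_continuous :: "(real \<Rightarrow> real) \<Rightarrow> bool" where
  "piecewise_continuous f \<longleftrightarrow>
     (\<forall>b. finite {t \<in> {0..b}. \<not> continuous (at t within {0..}) f}) \<and>
     (\<forall>t\<ge>0. \<exists>l. (f \<longlongrightarrow> l) (at_right t)) \<and>
     (\<forall>t>0. \<exists>l. (f \<longlongrightarrow> l) (at_left t))"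

definition bounded_fun :: "(real \<Rightarrow> real) \<Rightarrow> bool" where
  "bounded_fun f \<longleftrightarrow> (\<exists>B. \<forall>t\<ge>0. \<bar>f t\<bar> \<le> B)"

text \<open>Solution of (TVKR) on [0,\<infinity>): continuous, and satisfying the ODE at every t \<ge> 0
  outside a countable exceptional set (the coefficients are only piecewise continuous).\<close>
definition tvkr_solution ::
  "('n::finite \<Rightarrow> real \<Rightarrow> real) \<Rightarrow> ('n \<Rightarrow> 'n \<Rightarrow> real \<Rightarrow> real) \<Rightarrow> (real \<Rightarrow> 'n \<Rightarrow> real) \<Rightarrow> bool" where
  "tvkr_solution \<omega> a \<theta> \<longleftrightarrow>
     (\<forall>i. continuous_on {0..} (\<lambda>t. \<theta> t i)) \<and>
     (\<exists>S. countable S \<and>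
        (\<forall>i. \<forall>t\<in>{0..} - S.
           ((\<lambda>s. \<theta> s i) has_real_derivative
              (\<omega> i t + (\<Sum>j\<in>UNIV. a i j t * sin (\<theta> t j - \<theta> t i)))) (at t within {0..})))"

definition in_Ar :: "real \<Rightarrow> ('n \<Rightarrow> real) \<Rightarrow> bool" where
  "in_Ar r x \<longleftrightarrow> (\<forall>i j. i \<noteq> j \<longrightarrow> \<bar>x i - x j\<bar> \<le> r)"

definition Ar_invariant ::
  "real \<Rightarrow> ('n::finite \<Rightarrow> real \<Rightarrow> real) \<Rightarrow> ('n \<Rightarrow> 'n \<Rightarrow> real \<Rightarrow> real) \<Rightarrow> bool" where
  "Ar_invariant r \<omega> a \<longleftrightarrow>
     (\<forall>\<theta>. tvkr_solution \<omega> a \<theta> \<longrightarrow> in_Ar r (\<theta> 0) \<longrightarrow> (\<forall>t\<ge>0. in_Ar r (\<theta> t)))"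

definition PD_exp_stable ::
  "real \<Rightarrow> ('n::finite \<Rightarrow> real \<Rightarrow> real) \<Rightarrow> ('n \<Rightarrow> 'n \<Rightarrow> real \<Rightarrow> real) \<Rightarrow> bool" where
  "PD_exp_stable r \<omega> a \<longleftrightarrow>
     (\<exists>M T0 \<epsilon>. M > 0 \<and> T0 > 0 \<and> \<epsilon> > 0 \<and>
        (\<forall>\<phi> \<theta>. tvkr_solution \<omega> a \<phi> \<longrightarrow> tvkr_solution \<omega> a \<theta> \<longrightarrow>
           in_Ar r (\<phi> 0) \<longrightarrow> in_Ar r (\<theta> 0) \<longrightarrow>
           (\<forall>t\<ge>T0. \<forall>i j.
              \<bar>(\<phi> t i - \<phi> t j) - (\<theta> t i - \<theta> t j)\<bar>
                \<le> M * Max {\<bar>(\<phi> 0 k - \<phi> 0 l) - (\<theta> 0 k - \<theta> 0 l)\<bar> | k l. True}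
                    * exp (- \<epsilon> * t))))"

definition c_r :: "real \<Rightarrow> ('n \<Rightarrow> 'n \<Rightarrow> real \<Rightarrow> real) \<Rightarrow> 'n \<Rightarrow> 'n \<Rightarrow> real \<Rightarrow> real" where
  "c_r r a i j t = (if a i j t + a j i t > 0 then (a i j t + a j i t) * cos r else a i j t + a j i t)"

definition a_tilde :: "real \<Rightarrow> ('n \<Rightarrow> 'n \<Rightarrow> real \<Rightarrow> real) \<Rightarrow> 'n \<Rightarrow> 'n \<Rightarrow> real \<Rightarrow> real" where
  "a_tilde r a i k t = (if a i k t > 0 then a i k t * cos r else a i k t)"

text \<open>xi(L(t), r); L(t) is determined by the a_ij(t).\<close>
definition xi :: "('n::finite \<Rightarrow> 'n \<Rightarrow> real \<Rightarrow> real) \<Rightarrow> real \<Rightarrow> real \<Rightarrow> real" where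
  "xi a r t = - Min {c_r r a i j t + (\<Sum>k\<in>UNIV - {i, j}. min (a_tilde r a i k t) (a_tilde r a j k t))
                     | i j. i \<noteq> j}"

end

theory Submission
  imports Defs
begin


definition dini_ub :: "(real \<Rightarrow> real) \<Rightarrow> real \<Rightarrow> real \<Rightarrow> bool" where
  "dini_ub u t c \<longleftrightarrow> (\<forall>e>0. eventually (\<lambda>s. u s \<le> u t + (c + e) * (s - t)) (at_right t))"

lemma dini_mono:
  fixes g :: "real \<Rightarrow> real"
  assumes ab: "a \<le> b" and cont: "continuous_on {a..b} g" and C: "countable C"
    and dini: "\<And>t. t \<in> {a..<b} \<Longrightarrow> t \<notin> C \<Longrightarrow> dini_ub g t 0"
  shows "g b \<le> g a"
proof (rule ccontr)
  assume nle: "\<not> g b \<le> g a"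
  then have ab': "a < b" using ab by (cases "a = b") auto
  define e where "e = (g b - g a) / (2 * (b - a))"
  have e0: "e > 0" using nle ab' by (simp add: e_def)
  define h where "h t = g t - e * (t - a)" for t
  have "e * (b - a) = (g b - g a) / 2" using ab' by (simp add: e_def field_simps)
  then have hab: "h a < h b" using nle by (simp add: h_def)
  have hcont: "continuous_on {a..b} h" unfolding h_def by (intro continuous_intros cont)
  have "uncountable {h a<..<h b}" using hab by (simp add: uncountable_open_interval)
  moreover have "countable (h ` C)" using C by simp
  ultimately have "\<not> {h a<..<h b} \<subseteq> h ` C" using countable_subset by blast
  then obtain y where y: "h a < y" "y < h b" "y \<notin> h ` C" by (auto simp: subset_eq)
  define T where "T = {a..b} \<inter> h -` {..y}"
  have clT: "closed T" unfolding T_def by (rule continuous_closed_preimage[OF hcont]) auto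
  have aT: "a \<in> T" using y ab by (auto simp: T_def)
  have bdT: "bdd_above T" unfolding T_def by (auto intro: bdd_aboveI[where M=b])
  define \<tau> where "\<tau> = Sup T"
  have tT: "\<tau> \<in> T" unfolding \<tau>_def using closed_contains_Sup[OF _ bdT clT] aT by auto
  have up: "s \<le> \<tau>" if "s \<in> T" for s unfolding \<tau>_def using cSup_upper[OF that bdT] .
  have t1: "a \<le> \<tau>" "\<tau> \<le> b" "h \<tau> \<le> y" using tT by (auto simp: T_def)
  have tb: "\<tau> < b" using t1 y(2) by (metis order.not_eq_order_implies_strict not_le)
  have gt: "h s > y" if "\<tau> < s" "s \<le> b" for s
  proof (rule ccontr)
    assume "\<not> y < h s"
    then have "s \<in> T" using that t1 by (auto simp: T_def)
    then show False using up that by force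
  qed
  have hty: "h \<tau> = y"
  proof (rule ccontr)
    assume "h \<tau> \<noteq> y"
    then have lt: "h \<tau> < y" using t1 by auto
    have "continuous (at \<tau> within {a..b}) h" using hcont t1 by (simp add: continuous_on_eq_continuous_within)
    then obtain d where d: "d > 0" "\<And>s. s \<in> {a..b} \<Longrightarrow> dist s \<tau> < d \<Longrightarrow> dist (h s) (h \<tau>) < y - h \<tau>"
      using lt unfolding continuous_within_eps_delta by (metis diff_gt_0_iff_gt)
    define s where "s = min (\<tau> + d/2) b"
    have s: "\<tau> < s" "s \<le> b" "s \<in> {a..b}" "dist s \<tau> < d" using d tb t1 by (auto simp: s_def dist_real_def)
    have "h s < y" using d(2)[OF s(3,4)] by (auto simp: dist_real_def)
    then show False using gt[OF s(1,2)] by auto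
  qed
  have tC: "\<tau> \<notin> C" using hty y(3) by auto
  have "dini_ub g \<tau> 0" using dini tC t1 tb by auto
  then have "eventually (\<lambda>s. g s \<le> g \<tau> + (0 + e/2) * (s - \<tau>)) (at_right \<tau>)"
    unfolding dini_ub_def using e0 by (meson half_gt_zero)
  then obtain b' where b': "b' > \<tau>" "\<And>s. s > \<tau> \<Longrightarrow> s < b' \<Longrightarrow> g s \<le> g \<tau> + (e/2) * (s - \<tau>)"
    unfolding eventually_at_right_field by auto
  define s where "s = min ((\<tau> + b')/2) b"
  have s: "\<tau> < s" "s < b'" "s \<le> b" using b'(1) tb unfolding s_def min_def by auto
  define w where "w = e * (s - \<tau>)"
  have w0: "w > 0" using e0 s by (simp add: w_def)
  have "g s \<le> g \<tau> + w / 2" using b'(2)[OF s(1,2)] by (simp add: w_def)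
  moreover have "h s - h \<tau> = g s - g \<tau> - w" by (simp add: h_def w_def algebra_simps)
  ultimately have "h s < y" using hty w0 by linarith
  then show False using gt[OF s(1,3)] by auto
qed



lemma deriv_dini:
  assumes "(u has_real_derivative u') (at_right t)" "u' \<le> c"
  shows "dini_ub u t c"
  unfolding dini_ub_def
proof (intro allI impI)
  fix e :: real assume e: "e > 0"
  have "((\<lambda>y. (u y - u t) / (y - t)) \<longlongrightarrow> u') (at_right t)"
    using assms(1) by (simp add: has_field_derivative_iff)
  then have ev: "eventually (\<lambda>y. (u y - u t) / (y - t) < u' + e) (at_right t)"
    using e by (intro order_tendstoD(2)) auto
  show "eventually (\<lambda>s. u s \<le> u t + (c + e) * (s - t)) (at_right t)"
    using ev eventually_at_right_less[of t]
  proof eventually_elim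
    case (elim s)
    then have "u s - u t < (u' + e) * (s - t)" by (simp add: divide_less_eq)
    also have "\<dots> \<le> (c + e) * (s - t)" using elim assms(2) by (intro mult_right_mono) auto
    finally show ?case by simp
  qed
qed

lemma dini_Max:
  fixes u :: "'k \<Rightarrow> real \<Rightarrow> real"
  assumes K: "finite K" "K \<noteq> {}"
    and lim: "\<And>k. k \<in> K \<Longrightarrow> (u k \<longlongrightarrow> u k t) (at_right t)"
    and act: "\<And>k. k \<in> K \<Longrightarrow> u k t = Max ((\<lambda>k. u k t) ` K) \<Longrightarrow> dini_ub (u k) t c"
  shows "dini_ub (\<lambda>s. Max ((\<lambda>k. u k s) ` K)) t c"
  unfolding dini_ub_def
proof (intro allI impI)
  fix e :: real assume e: "e > 0"
  define M where "M = Max ((\<lambda>k. u k t) ` K)"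
  have Mge: "u k t \<le> M" if "k \<in> K" for k using K that by (auto simp: M_def)
  have ev: "\<forall>k\<in>K. eventually (\<lambda>s. u k s \<le> M + (c + e) * (s - t)) (at_right t)"
  proof
    fix k assume k: "k \<in> K"
    show "eventually (\<lambda>s. u k s \<le> M + (c + e) * (s - t)) (at_right t)"
    proof (cases "u k t = M")
      case True
      then show ?thesis using act[OF k] e unfolding dini_ub_def M_def by auto
    next
      case False
      then have gap: "M - u k t > 0" using Mge[OF k] by auto
      have e1: "eventually (\<lambda>s. u k s < u k t + (M - u k t)/2) (at_right t)"
        using lim[OF k] gap by (intro order_tendstoD(2)) auto
      have "((\<lambda>s. (c + e) * (s - t)) \<longlongrightarrow> (c + e) * (t - t)) (at_right t)"
        by (intro tendsto_intros)
      then have e2: "eventually (\<lambda>s. (c + e) * (s - t) > - ((M - u k t)/2)) (at_right t)"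
        using gap by (intro order_tendstoD(1)) auto
      show ?thesis using e1 e2
      proof eventually_elim
        case (elim s)
        have aux: "\<And>x y M w::real. x < y + (M-y)/2 \<Longrightarrow> -((M-y)/2) < w \<Longrightarrow> x \<le> M + w" by argo
        from aux[OF elim] show ?case .
      qed
    qed
  qed
  have "eventually (\<lambda>s. \<forall>k\<in>K. u k s \<le> M + (c + e) * (s - t)) (at_right t)"
    using eventually_ball_finite[OF K(1) ev] .
  then show "eventually (\<lambda>s. Max ((\<lambda>k. u k s) ` K) \<le> Max ((\<lambda>k. u k t) ` K) + (c + e) * (s - t)) (at_right t)"
    by eventually_elim (use K in \<open>auto simp: M_def\<close>)
qed

lemma dini_mono_c:
  assumes "dini_ub u t c" "c \<le> c'" shows "dini_ub u t c'"
  using assms unfolding dini_ub_def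
proof (intro allI impI)
  fix e :: real assume *: "\<forall>e>0. eventually (\<lambda>s. u s \<le> u t + (c + e) * (s - t)) (at_right t)" "e > 0"
  show "eventually (\<lambda>s. u s \<le> u t + (c' + e) * (s - t)) (at_right t)"
    using *(1)[rule_format, OF *(2)] eventually_at_right_less[of t]
  proof eventually_elim
    case (elim s)
    have "(c + e) * (s - t) \<le> (c' + e) * (s - t)" using elim assms(2) by (intro mult_right_mono) auto
    then show ?case using elim by linarith
  qed
qed

lemma dini_prod:
  assumes D: "dini_ub D t c" and f: "(f has_real_derivative f') (at_right t)"
    and fpos: "\<And>s. f s > 0"
  shows "dini_ub (\<lambda>s. D s * f s) t (c * f t + D t * f')"
  unfolding dini_ub_def
proof (intro allI impI)
  fix e :: real assume e: "e > 0"
  define e1 where "e1 = e / (3 * f t)"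
  have e1: "e1 > 0" "e1 * f t = e / 3" using e fpos[of t] by (auto simp: e1_def)
  have fcont: "(f \<longlongrightarrow> f t) (at_right t)"
    using DERIV_continuous[OF f] by (simp add: continuous_within)
  have "((\<lambda>s. (c + e1) * f s) \<longlongrightarrow> (c + e1) * f t) (at_right t)"
    by (intro tendsto_intros fcont)
  then have ev1: "eventually (\<lambda>s. (c + e1) * f s < (c + e1) * f t + e/3) (at_right t)"
    using e by (intro order_tendstoD(2)) auto
  have "((\<lambda>y. (f y - f t) / (y - t)) \<longlongrightarrow> f') (at_right t)"
    using f by (simp add: has_field_derivative_iff)
  then have "((\<lambda>y. D t * ((f y - f t) / (y - t))) \<longlongrightarrow> D t * f') (at_right t)"
    by (intro tendsto_intros)
  then have ev2: "eventually (\<lambda>y. D t * ((f y - f t) / (y - t)) < D t * f' + e/3) (at_right t)"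
    using e by (intro order_tendstoD(2)) auto
  have ev3: "eventually (\<lambda>s. D s \<le> D t + (c + e1) * (s - t)) (at_right t)"
    using D e1 unfolding dini_ub_def by auto
  show "eventually (\<lambda>s. D s * f s \<le> D t * f t + (c * f t + D t * f' + e) * (s - t)) (at_right t)"
    using ev1 ev2 ev3 eventually_at_right_less[of t]
  proof eventually_elim
    case (elim s)
    define w where "w = s - t"
    have w: "w > 0" using elim by (simp add: w_def)
    have "(D s - D t) * f s \<le> ((c + e1) * w) * f s"
      using elim fpos[of s] by (intro mult_right_mono) (auto simp: w_def)
    also have "\<dots> = w * ((c + e1) * f s)" by simp
    also have "\<dots> \<le> w * ((c + e1) * f t + e/3)" using elim w by (intro mult_left_mono) auto
    finally have A: "(D s - D t) * f s \<le> w * ((c + e1) * f t + e/3)" .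
    have "D t * (f s - f t) = w * (D t * ((f s - f t) / (s - t)))" using w by (simp add: w_def)
    also have "\<dots> \<le> w * (D t * f' + e/3)" using elim w by (intro mult_left_mono) auto
    finally have B: "D t * (f s - f t) \<le> w * (D t * f' + e/3)" .
    have "D s * f s - D t * f t = (D s - D t) * f s + D t * (f s - f t)" by (simp add: algebra_simps)
    also have "\<dots> \<le> w * ((c + e1) * f t + e/3) + w * (D t * f' + e/3)" using A B by linarith
    also have "\<dots> = w * (c * f t + D t * f') + w * (e1 * f t) + w * (2*e/3)" by (simp add: algebra_simps)
    also have "\<dots> = w * (c * f t + D t * f' + e)" unfolding e1(2) by (simp add: algebra_simps)
    finally show ?case by (simp add: w_def algebra_simps)
  qed
qed

lemma tendsto_Min_finite:
  fixes F :: "'k \<Rightarrow> 'a \<Rightarrow> real"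
  assumes "finite P" "P \<noteq> {}" "\<And>p. p \<in> P \<Longrightarrow> (F p \<longlongrightarrow> l p) net"
  shows "((\<lambda>s. Min ((\<lambda>p. F p s) ` P)) \<longlongrightarrow> Min (l ` P)) net"
  using assms
proof (induction P rule: finite_ne_induct)
  case (singleton x)
  then show ?case by simp
next
  case (insert x A)
  have "((\<lambda>s. min (F x s) (Min ((\<lambda>p. F p s) ` A))) \<longlongrightarrow> min (l x) (Min (l ` A))) net"
    using insert by (intro tendsto_min) auto
  then show ?case using insert by (simp add: Min_insert)
qed

lemma tendsto_Max_finite:
  fixes F :: "'k \<Rightarrow> 'a \<Rightarrow> real"
  assumes "finite P" "P \<noteq> {}" "\<And>p. p \<in> P \<Longrightarrow> (F p \<longlongrightarrow> l p) net"
  shows "((\<lambda>s. Max ((\<lambda>p. F p s) ` P)) \<longlongrightarrow> Max (l ` P)) net"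
  using assms
proof (induction P rule: finite_ne_induct)
  case (singleton x)
  then show ?case by simp
next
  case (insert x A)
  have "((\<lambda>s. max (F x s) (Max ((\<lambda>p. F p s) ` A))) \<longlongrightarrow> max (l x) (Max (l ` A))) net"
    using insert by (intro tendsto_max) auto
  then show ?case using insert by (simp add: Max_insert)
qed



lemma sin_diff_bounds:
  fixes x y r :: real
  assumes "x \<le> y" "\<bar>x\<bar> \<le> r" "\<bar>y\<bar> \<le> r" "r < pi/2"
  shows "cos r * (y - x) \<le> sin y - sin x" "sin y - sin x \<le> y - x"
proof -
  have "cos r * (y - x) \<le> sin y - sin x \<and> sin y - sin x \<le> y - x"
  proof (cases "x = y")
    case True then show ?thesis by simp
  next
    case False
    then have xy: "x < y" using assms by simp
    obtain z where z: "x < z" "z < y" "sin y - sin x = (y - x) * cos z"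
      using MVT2[OF xy, of sin cos] by (auto intro: DERIV_sin)
    have zr: "\<bar>z\<bar> \<le> r" using z assms by auto
    have "cos r \<le> cos \<bar>z\<bar>" using zr assms by (intro cos_monotone_0_pi_le) auto
    then have c1: "cos r \<le> cos z" by simp
    have c2: "cos z \<le> 1" by simp
    show ?thesis using z(3) c1 c2 xy
      by (auto intro: mult_left_mono simp: mult.commute)
  qed
  then show "cos r * (y - x) \<le> sin y - sin x" "sin y - sin x \<le> y - x" by auto
qed

lemma L1:
  fixes x y r a :: real
  assumes "x \<le> y" "\<bar>x\<bar> \<le> r" "\<bar>y\<bar> \<le> r" "r < pi/2"
  shows "a * (sin x - sin y) \<le> (if a > 0 then a * cos r else a) * (x - y)"
proof (cases "a > 0")
  case True
  have "a * (cos r * (y - x)) \<le> a * (sin y - sin x)"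
    using sin_diff_bounds(1)[OF assms] True by (intro mult_left_mono) auto
  then show ?thesis using True by (simp add: algebra_simps)
next
  case False
  have "(- a) * (sin y - sin x) \<le> (- a) * (y - x)"
    using sin_diff_bounds(2)[OF assms] False by (intro mult_left_mono) auto
  then show ?thesis using False by (simp add: algebra_simps)
qed

lemma sum_split2:
  fixes f :: "'n::finite \<Rightarrow> real"
  assumes "p \<noteq> q"
  shows "(\<Sum>j\<in>UNIV. f j) = f p + f q + (\<Sum>j\<in>UNIV - {p, q}. f j)"
proof -
  have "(\<Sum>j\<in>UNIV. f j) = f p + (\<Sum>j\<in>UNIV - {p}. f j)"
    by (simp add: sum.remove[of UNIV p])
  also have "(\<Sum>j\<in>UNIV - {p}. f j) = f q + (\<Sum>j\<in>UNIV - {p} - {q}. f j)"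
    using assms by (intro sum.remove) auto
  also have "UNIV - {p} - {q} = UNIV - {p, q}" by auto
  finally show ?thesis by simp
qed

lemma core:
  fixes A :: "'n::finite \<Rightarrow> 'n \<Rightarrow> real" and x y :: "'n \<Rightarrow> real"
  assumes diag: "\<And>i. A i i = 0"
    and r: "r < pi/2"
    and xr: "\<And>i j. \<bar>x i - x j\<bar> \<le> r" and yr: "\<And>i j. \<bar>y i - y j\<bar> \<le> r"
    and pq: "p \<noteq> q"
    and mx: "\<And>k. x k - y k \<le> x p - y p" and mn: "\<And>k. x q - y q \<le> x k - y k"
  shows "(\<Sum>j\<in>UNIV. A p j * (sin (x j - x p) - sin (y j - y p)))
       - (\<Sum>j\<in>UNIV. A q j * (sin (x j - x q) - sin (y j - y q)))
     \<le> - ((if A p q + A q p > 0 then (A p q + A q p) * cos r else A p q + A q p)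
          + (\<Sum>k\<in>UNIV - {p, q}. min (if A p k > 0 then A p k * cos r else A p k)
                                    (if A q k > 0 then A q k * cos r else A q k)))
        * ((x p - y p) - (x q - y q))"
proof -
  define d where "d k = x k - y k" for k
  define D where "D = d p - d q"
  define aT where "aT i k = (if A i k > 0 then A i k * cos r else A i k)" for i k
  define cc where "cc = (if A p q + A q p > 0 then (A p q + A q p) * cos r else A p q + A q p)"
  define F where "F i j = A i j * (sin (x j - x i) - sin (y j - y i))" for i j
  have S1: "(\<Sum>j\<in>UNIV. F p j) = F p p + F p q + (\<Sum>j\<in>UNIV - {p, q}. F p j)"
    using sum_split2[OF pq] .
  have S2: "(\<Sum>j\<in>UNIV. F q j) = F q p + F q q + (\<Sum>j\<in>UNIV - {p, q}. F q j)"
    using sum_split2[OF pq] .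
  have Fpp: "F p p = 0" "F q q = 0" by (auto simp: F_def diag)
  have pair: "F p q - F q p \<le> - cc * D"
  proof -
    have "F p q - F q p = (A p q + A q p) * (sin (x q - x p) - sin (y q - y p))"
    proof -
      have "sin (x p - x q) = - sin (x q - x p)" "sin (y p - y q) = - sin (y q - y p)"
        by (metis minus_diff_eq sin_minus)+
      then show ?thesis by (simp add: F_def algebra_simps)
    qed
    also have "\<dots> \<le> cc * ((x q - x p) - (y q - y p))"
      unfolding cc_def
    proof (rule L1)
      show "x q - x p \<le> y q - y p" using mx[of q] by simp
    qed (use xr yr r in auto)
    also have "\<dots> = - cc * D" by (simp add: D_def d_def algebra_simps)
    finally show ?thesis .
  qed
  have rest: "F p k - F q k \<le> - min (aT p k) (aT q k) * D" for k
  proof -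
    have t1: "F p k \<le> aT p k * ((x k - x p) - (y k - y p))"
      unfolding F_def aT_def
    proof (rule L1)
      show "x k - x p \<le> y k - y p" using mx[of k] by simp
    qed (use xr yr r in auto)
    have t2: "- F q k \<le> aT q k * ((y k - y q) - (x k - x q))"
    proof -
      have "A q k * (sin (y k - y q) - sin (x k - x q)) \<le> aT q k * ((y k - y q) - (x k - x q))"
        unfolding aT_def
      proof (rule L1)
        show "y k - y q \<le> x k - x q" using mn[of k] by simp
      qed (use xr yr r in auto)
      then show ?thesis by (simp add: F_def algebra_simps)
    qed
    have a1: "(x k - x p) - (y k - y p) = - (d p - d k)" by (simp add: d_def)
    have a2: "(y k - y q) - (x k - x q) = - (d k - d q)" by (simp add: d_def)
    have n1: "d p - d k \<ge> 0" "d k - d q \<ge> 0" using mx[of k] mn[of k] by (auto simp: d_def)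
    define m where "m = min (aT p k) (aT q k)"
    have b1: "F p k - F q k \<le> aT p k * (d k - d p) + aT q k * (d q - d k)"
      using t1 t2 a1 a2 by (simp add: d_def)
    have b2: "aT p k * (d k - d p) \<le> m * (d k - d p)"
      using n1 by (intro mult_right_mono_neg) (auto simp: m_def)
    have b3: "aT q k * (d q - d k) \<le> m * (d q - d k)"
      using n1 by (intro mult_right_mono_neg) (auto simp: m_def)
    have "F p k - F q k \<le> m * (d k - d p) + m * (d q - d k)" using b1 b2 b3 by linarith
    also have "\<dots> = - min (aT p k) (aT q k) * D" by (simp add: m_def D_def algebra_simps)
    finally show ?thesis .
  qed
  have "(\<Sum>j\<in>UNIV. F p j) - (\<Sum>j\<in>UNIV. F q j)
        = (F p q - F q p) + (\<Sum>k\<in>UNIV - {p, q}. F p k - F q k)"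
    using S1 S2 Fpp by (simp add: sum_subtractf)
  also have "\<dots> \<le> - cc * D + (\<Sum>k\<in>UNIV - {p, q}. - min (aT p k) (aT q k) * D)"
    using pair rest by (intro add_mono sum_mono) auto
  also have "\<dots> = - (cc + (\<Sum>k\<in>UNIV - {p, q}. min (aT p k) (aT q k))) * D"
    by (simp add: sum_distrib_right sum_distrib_left algebra_simps sum_negf)
  finally show ?thesis by (simp add: F_def aT_def cc_def D_def d_def)
qed



definition Sfun :: "('n::finite \<Rightarrow> 'n \<Rightarrow> real \<Rightarrow> real) \<Rightarrow> real \<Rightarrow> 'n \<Rightarrow> 'n \<Rightarrow> real \<Rightarrow> real" where
  "Sfun a r i j t = c_r r a i j t + (\<Sum>k\<in>UNIV - {i, j}. min (a_tilde r a i k t) (a_tilde r a j k t))"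

lemma xi_eq: "xi a r t = - Min ((\<lambda>(i,j). Sfun a r i j t) ` {(i,j). i \<noteq> j})"
proof -
  have "{c_r r a i j t + (\<Sum>k\<in>UNIV - {i, j}. min (a_tilde r a i k t) (a_tilde r a j k t)) | i j. i \<noteq> j}
      = (\<lambda>(i,j). Sfun a r i j t) ` {(i,j). i \<noteq> j}"
    by (auto simp: Sfun_def)
  then show ?thesis by (simp add: xi_def)
qed

lemma fin_pairs: "finite ((\<lambda>(i,j). Sfun a r i j t) ` {(i::'n::finite,j). i \<noteq> j})"
  by simp

lemma xi_ge:
  fixes a :: "'n::finite \<Rightarrow> 'n \<Rightarrow> real \<Rightarrow> real"
  assumes "p \<noteq> q"
  shows "- Sfun a r p q t \<le> xi a r t"
proof -
  have "Min ((\<lambda>(i,j). Sfun a r i j t) ` {(i,j). i \<noteq> j}) \<le> Sfun a r p q t"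
    using assms by (intro Min_le) auto
  then show ?thesis by (simp add: xi_eq)
qed

lemma pos_part_eq: "(if v > 0 then v * c else v) = c * max v 0 + min v (0::real)"
  by auto

lemma xi_cont:
  fixes a :: "'n::finite \<Rightarrow> 'n \<Rightarrow> real \<Rightarrow> real"
  assumes ex: "\<exists>p q::'n. p \<noteq> q"
    and cont: "\<And>i j. continuous (at t within S) (a i j)"
  shows "continuous (at t within S) (xi a r)"
proof -
  have lim: "((\<lambda>s. a i j s) \<longlongrightarrow> a i j t) (at t within S)" for i j
    using cont[of i j] by (simp add: continuous_within)
  have cr: "c_r r a i j s = cos r * max (a i j s + a j i s) 0 + min (a i j s + a j i s) 0" for i j s
    unfolding c_r_def by (rule pos_part_eq)
  have at: "a_tilde r a i j s = cos r * max (a i j s) 0 + min (a i j s) 0" for i j s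
    unfolding a_tilde_def by (rule pos_part_eq)
  have Sl: "((\<lambda>s. Sfun a r i j s) \<longlongrightarrow> Sfun a r i j t) (at t within S)" for i j
    unfolding Sfun_def cr at by (intro tendsto_intros lim)
  have "((\<lambda>s. Min ((\<lambda>pr. (\<lambda>(i,j). Sfun a r i j s) pr) ` {(i,j). i \<noteq> j}))
        \<longlongrightarrow> Min ((\<lambda>pr. (\<lambda>(i,j). Sfun a r i j t) pr) ` {(i::'n,j). i \<noteq> j})) (at t within S)"
    using ex by (intro tendsto_Min_finite) (auto simp: Sl split: prod.splits)
  then have "((\<lambda>s. xi a r s) \<longlongrightarrow> xi a r t) (at t within S)"
    unfolding xi_eq by (intro tendsto_intros)
  then show ?thesis by (simp add: continuous_within)
qed

lemma xi_upper:
  fixes a :: "'n::finite \<Rightarrow> 'n \<Rightarrow> real \<Rightarrow> real"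
  assumes ex: "\<exists>p q::'n. p \<noteq> q" and r: "0 \<le> r" "r < pi/2"
    and K: "\<And>i. (\<Sum>k\<in>UNIV. \<bar>a i k t\<bar>) \<le> K"
  shows "xi a r t \<le> 4 * K"
proof -
  have cr0: "0 \<le> cos r" "cos r \<le> 1" using r by (auto intro: cos_ge_zero)
  let ?P = "(\<lambda>(i,j). Sfun a r i j t) ` {(i::'n,j). i \<noteq> j}"
  have "?P \<noteq> {}" using ex by auto
  then have "Min ?P \<in> ?P" by (intro Min_in) auto
  then obtain p q where pq: "p \<noteq> q" "Min ?P = Sfun a r p q t" by auto
  have abs_pp: "\<bar>(if v > 0 then v * cos r else v)\<bar> \<le> \<bar>v\<bar>" for v
    using cr0 by (auto simp: abs_mult intro: mult_left_le)
  have le: "\<bar>a i j t\<bar> \<le> K" for i j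
    using member_le_sum[of j UNIV "\<lambda>k. \<bar>a i k t\<bar>"] K[of i] by auto
  have c1: "- c_r r a p q t \<le> \<bar>a p q t\<bar> + \<bar>a q p t\<bar>"
    using abs_pp[of "a p q t + a q p t"] unfolding c_r_def by linarith
  have c2: "- (\<Sum>k\<in>UNIV - {p, q}. min (a_tilde r a p k t) (a_tilde r a q k t))
           \<le> (\<Sum>k\<in>UNIV. \<bar>a p k t\<bar>) + (\<Sum>k\<in>UNIV. \<bar>a q k t\<bar>)"
  proof -
    have "- (\<Sum>k\<in>UNIV - {p, q}. min (a_tilde r a p k t) (a_tilde r a q k t))
        = (\<Sum>k\<in>UNIV - {p, q}. - min (a_tilde r a p k t) (a_tilde r a q k t))"
      by (simp add: sum_negf)
    also have "\<dots> \<le> (\<Sum>k\<in>UNIV - {p, q}. \<bar>a p k t\<bar> + \<bar>a q k t\<bar>)"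
    proof (rule sum_mono)
      fix k
      show "- min (a_tilde r a p k t) (a_tilde r a q k t) \<le> \<bar>a p k t\<bar> + \<bar>a q k t\<bar>"
        using abs_pp[of "a p k t"] abs_pp[of "a q k t"] unfolding a_tilde_def by linarith
    qed
    also have "\<dots> \<le> (\<Sum>k\<in>UNIV. \<bar>a p k t\<bar> + \<bar>a q k t\<bar>)"
      by (intro sum_mono2) auto
    also have "\<dots> = (\<Sum>k\<in>UNIV. \<bar>a p k t\<bar>) + (\<Sum>k\<in>UNIV. \<bar>a q k t\<bar>)"
      by (simp add: sum.distrib)
    finally show ?thesis .
  qed
  have "xi a r t = - Sfun a r p q t" using pq by (simp add: xi_eq)
  also have "\<dots> \<le> 4 * K" using c1 c2 le[of p q] le[of q p] K[of p] K[of q]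
    unfolding Sfun_def by linarith
  finally show ?thesis .
qed



lemma disc_countable:
  assumes "piecewise_continuous f"
  shows "countable {t. t \<ge> 0 \<and> \<not> continuous (at t within {0..}) f}"
proof -
  have "{t. t \<ge> 0 \<and> \<not> continuous (at t within {0..}) f}
      = (\<Union>n::nat. {t \<in> {0..real n}. \<not> continuous (at t within {0..}) f})"
    by (auto intro: real_arch_simple)
  moreover have fin: "finite {t \<in> {0..real n}. \<not> continuous (at t within {0..}) f}" for n
    using assms unfolding piecewise_continuous_def by blast
  moreover have "countable (\<Union>n::nat. {t \<in> {0..real n}. \<not> continuous (at t within {0..}) f})"
  proof -
    have "countable {t \<in> {0..real n}. \<not> continuous (at t within {0..}) f}" for n
      using fin countable_finite by blast
    then show ?thesis by blast
  qed
  ultimately show ?thesis by simp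
qed

lemma integral_facts:
  fixes xf :: "real \<Rightarrow> real"
  assumes T: "T > 0" and eta: "\<eta> > 0"
    and avg: "\<forall>t\<ge>0. (1 / T) * integral {t..t+T} xf \<le> - \<eta>"
    and Bx: "\<And>t. t \<ge> 0 \<Longrightarrow> xf t \<le> Bx" "Bx \<ge> 0"
  shows "\<And>t. t \<ge> 0 \<Longrightarrow> xf integrable_on {0..t}"
    and "\<And>t. t \<ge> 0 \<Longrightarrow> integral {0..t} xf \<le> - \<eta> * t + (\<eta> + Bx) * T"
proof -
  have ik: "xf integrable_on {t..t+T} \<and> integral {t..t+T} xf \<le> - \<eta> * T" if "t \<ge> 0" for t
  proof -
    have h: "(1 / T) * integral {t..t+T} xf \<le> - \<eta>" using avg that by auto
    then have "integral {t..t+T} xf \<le> - \<eta> * T" using T by (simp add: field_simps)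
    moreover have "integral {t..t+T} xf \<noteq> 0" using h eta by auto
    ultimately show ?thesis using not_integrable_integral by blast
  qed
  have In: "xf integrable_on {0..real n * T} \<and> integral {0..real n * T} xf \<le> - \<eta> * (real n * T)" for n :: nat
  proof (induction n)
    case 0
    then show ?case using integrable_on_refl[of xf 0] by simp
  next
    case (Suc n)
    have k: "xf integrable_on {real n * T..real n * T + T}" "integral {real n * T..real n * T + T} xf \<le> - \<eta> * T"
      using ik[of "real n * T"] T by auto
    have eq: "real (Suc n) * T = real n * T + T" by (simp add: algebra_simps)
    have i: "xf integrable_on {0..real n * T + T}"
      by (rule Henstock_Kurzweil_Integration.integrable_combine[where c="real n * T"]) (use Suc.IH k(1) T in auto)
    have "integral {0..real n * T + T} xf = integral {0..real n * T} xf + integral {real n * T..real n * T + T} xf"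
      by (rule Henstock_Kurzweil_Integration.integral_combine[symmetric]) (use i T in simp_all)
    also have "\<dots> \<le> - \<eta> * (real n * T) + - \<eta> * T" using Suc.IH k(2) by linarith
    also have "\<dots> = - \<eta> * (real n * T + T)" by (simp add: algebra_simps)
    finally show ?case using i unfolding eq by simp
  qed
  show int: "xf integrable_on {0..t}" if "t \<ge> 0" for t
  proof -
    obtain n :: nat where "t / T \<le> real n" using real_arch_simple by blast
    then have "t \<le> real n * T" using T by (simp add: field_simps)
    show ?thesis
      by (rule integrable_subinterval_real[OF conjunct1[OF In[of n]]]) (use \<open>t \<le> real n * T\<close> that in auto)
  qed
  show "integral {0..t} xf \<le> - \<eta> * t + (\<eta> + Bx) * T" if t: "t \<ge> 0" for t
  proof -
    define n where "n = nat \<lfloor>t / T\<rfloor>"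
    have tT: "0 \<le> t / T" using t T by simp
    have rn: "real n = of_int \<lfloor>t / T\<rfloor>" unfolding n_def using tT by simp
    have fl: "real n \<le> t / T" "t / T < real n + 1" unfolding rn using floor_correct[of "t/T"] by auto
    have "real n * T \<le> t / T * T" using fl(1) T by (intro mult_right_mono) auto
    moreover have "t / T * T < (real n + 1) * T" using fl(2) T by (intro mult_strict_right_mono) auto
    ultimately have n1: "real n * T \<le> t" "t < real n * T + T" using T by (auto simp: algebra_simps)
    have nn: "0 \<le> real n * T" using T by simp
    have "integral {0..t} xf = integral {0..real n * T} xf + integral {real n * T..t} xf"
      by (rule Henstock_Kurzweil_Integration.integral_combine[symmetric]) (use int[OF t] n1 nn in simp_all)
    also have "integral {real n * T..t} xf \<le> integral {real n * T..t} (\<lambda>_. Bx)"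
    proof (rule integral_le)
      show "xf integrable_on {real n * T..t}"
        by (rule integrable_subinterval_real[OF int[OF t]]) (use nn in simp)
      show "(\<lambda>_. Bx) integrable_on {real n * T..t}" by (rule integrable_const_ivl)
      show "\<And>x. x \<in> {real n * T..t} \<Longrightarrow> xf x \<le> Bx" using Bx(1) nn by simp
    qed
    also have "\<dots> = Bx * (t - real n * T)" using n1 by simp
    also have "\<dots> \<le> Bx * T" using n1 Bx(2) by (intro mult_left_mono) auto
    finally have "integral {0..t} xf \<le> - \<eta> * (real n * T) + Bx * T" using In[of n] by linarith
    also have "- \<eta> * (real n * T) \<le> - \<eta> * (t - T)" using n1 eta by (intro mult_left_mono_neg) auto
    finally show ?thesis by (simp add: algebra_simps)
  qed
qed



lemma continuous_on_Max_finite: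
  fixes u :: "'k \<Rightarrow> real \<Rightarrow> real"
  assumes "finite K" "K \<noteq> {}" "\<And>k. k \<in> K \<Longrightarrow> continuous_on S (u k)"
  shows "continuous_on S (\<lambda>s. Max ((\<lambda>k. u k s) ` K))"
  unfolding continuous_on_def
proof
  fix x assume x: "x \<in> S"
  show "((\<lambda>s. Max ((\<lambda>k. u k s) ` K)) \<longlongrightarrow> Max ((\<lambda>k. u k x) ` K)) (at x within S)"
    using assms x by (intro tendsto_Max_finite) (auto simp: continuous_on_def)
qed

lemma D_bound:
  fixes \<omega> :: "'n::finite \<Rightarrow> real \<Rightarrow> real" and a :: "'n \<Rightarrow> 'n \<Rightarrow> real \<Rightarrow> real"
  assumes ex: "\<exists>p q::'n. p \<noteq> q"
    and a_pc: "\<And>i j. piecewise_continuous (a i j)"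
    and a_diag: "\<And>i t. a i i t = 0"
    and r: "0 \<le> r" "r < pi / 2"
    and inv: "Ar_invariant r \<omega> a"
    and intg: "\<And>b. b \<ge> 0 \<Longrightarrow> (xi a r) integrable_on {0..b}"
    and s\<phi>: "tvkr_solution \<omega> a \<phi>" and s\<theta>: "tvkr_solution \<omega> a \<theta>"
    and i\<phi>: "in_Ar r (\<phi> 0)" and i\<theta>: "in_Ar r (\<theta> 0)"
    and b: "b \<ge> 0"
  shows "Max ((\<lambda>k. (\<phi> b (fst k) - \<theta> b (fst k)) - (\<phi> b (snd k) - \<theta> b (snd k))) ` UNIV)
       \<le> Max ((\<lambda>k. (\<phi> 0 (fst k) - \<theta> 0 (fst k)) - (\<phi> 0 (snd k) - \<theta> 0 (snd k))) ` UNIV)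
          * exp (integral {0..b} (xi a r))"
proof -
  define \<delta> where "\<delta> s i = \<phi> s i - \<theta> s i" for s i
  define u where "u k s = \<delta> s (fst k) - \<delta> s (snd k)" for k :: "'n \<times> 'n" and s
  define Dm where "Dm s = Max ((\<lambda>k. u k s) ` UNIV)" for s
  define E where "E s = integral {0..s} (xi a r)" for s
  define g where "g s = Dm s * exp (- E s)" for s
  obtain S\<phi> where S\<phi>: "countable S\<phi>"
    "\<And>i t. t \<in> {0..} - S\<phi> \<Longrightarrow> ((\<lambda>s. \<phi> s i) has_real_derivative
              (\<omega> i t + (\<Sum>j\<in>UNIV. a i j t * sin (\<phi> t j - \<phi> t i)))) (at t within {0..})"
    using s\<phi> unfolding tvkr_solution_def by blast
  obtain S\<theta> where S\<theta>: "countable S\<theta>"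
    "\<And>i t. t \<in> {0..} - S\<theta> \<Longrightarrow> ((\<lambda>s. \<theta> s i) has_real_derivative
              (\<omega> i t + (\<Sum>j\<in>UNIV. a i j t * sin (\<theta> t j - \<theta> t i)))) (at t within {0..})"
    using s\<theta> unfolding tvkr_solution_def by blast
  have c\<phi>: "\<And>i. continuous_on {0..} (\<lambda>t. \<phi> t i)" and c\<theta>: "\<And>i. continuous_on {0..} (\<lambda>t. \<theta> t i)"
    using s\<phi> s\<theta> unfolding tvkr_solution_def by auto
  define Disc where "Disc = (\<Union>k\<in>UNIV. {t. t \<ge> 0 \<and> \<not> continuous (at t within {0..}) (a (fst k) (snd k))})"
  have cDisc: "countable Disc" unfolding Disc_def
    by (rule countable_UN) (auto intro: disc_countable a_pc simp del: mem_Collect_eq)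
  define C where "C = S\<phi> \<union> S\<theta> \<union> Disc"
  have cC: "countable C" using S\<phi>(1) S\<theta>(1) cDisc by (simp add: C_def)
  have inA: "in_Ar r (\<phi> t)" "in_Ar r (\<theta> t)" if "t \<ge> 0" for t
    using inv s\<phi> s\<theta> i\<phi> i\<theta> that unfolding Ar_invariant_def by blast+
  have inA': "\<bar>\<phi> t i - \<phi> t j\<bar> \<le> r" "\<bar>\<theta> t i - \<theta> t j\<bar> \<le> r" if "t \<ge> 0" for t i j
    using inA[OF that] r(1) unfolding in_Ar_def by (cases "i = j"; auto)+
  have ucont: "continuous_on {0..b} (u k)" for k
  proof -
    have "continuous_on {0..b} (\<lambda>t. \<phi> t i)" "continuous_on {0..b} (\<lambda>t. \<theta> t i)" for i
      using c\<phi>[of i] c\<theta>[of i] by (auto intro: continuous_on_subset)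
    then show ?thesis unfolding u_def \<delta>_def by (intro continuous_intros) auto
  qed
  have Dcont: "continuous_on {0..b} Dm"
    unfolding Dm_def by (rule continuous_on_Max_finite) (auto intro: ucont)
  have Econt: "continuous_on {0..b} E"
    unfolding E_def by (rule indefinite_integral_continuous_1[OF intg[OF b]])
  have gcont: "continuous_on {0..b} g"
    unfolding g_def by (intro continuous_intros Dcont Econt)
  have Dm_ge: "u k s \<le> Dm s" for k s unfolding Dm_def by (rule Max_ge) auto
  have Dm0: "0 \<le> Dm s" for s using Dm_ge[of "(undefined, undefined)" s] by (simp add: u_def)
  have dini: "dini_ub g t 0" if t: "t \<in> {0..<b}" "t \<notin> C" for t
  proof -
    have t0: "t \<ge> 0" "t < b" using t by auto
    define F\<phi> where "F\<phi> i = \<omega> i t + (\<Sum>j\<in>UNIV. a i j t * sin (\<phi> t j - \<phi> t i))" for i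
    define F\<theta> where "F\<theta> i = \<omega> i t + (\<Sum>j\<in>UNIV. a i j t * sin (\<theta> t j - \<theta> t i))" for i
    have d\<phi>: "((\<lambda>s. \<phi> s i) has_real_derivative F\<phi> i) (at_right t)" for i
    proof -
      have "t \<in> {0..} - S\<phi>" using t t0 by (auto simp: C_def)
      moreover have sub: "{t<..} \<subseteq> {0..}" using t0 by auto
      ultimately show ?thesis unfolding F\<phi>_def using DERIV_subset[OF S\<phi>(2)] by blast
    qed
    have d\<theta>: "((\<lambda>s. \<theta> s i) has_real_derivative F\<theta> i) (at_right t)" for i
    proof -
      have "t \<in> {0..} - S\<theta>" using t t0 by (auto simp: C_def)
      moreover have sub: "{t<..} \<subseteq> {0..}" using t0 by auto
      ultimately show ?thesis unfolding F\<theta>_def using DERIV_subset[OF S\<theta>(2)] by blast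
    qed
    define U' where "U' k = (F\<phi> (fst k) - F\<theta> (fst k)) - (F\<phi> (snd k) - F\<theta> (snd k))" for k :: "'n \<times> 'n"
    have du: "(u k has_real_derivative U' k) (at_right t)" for k
      unfolding u_def[abs_def] \<delta>_def U'_def by (intro derivative_intros d\<phi> d\<theta>)
    have U'le: "U' k \<le> xi a r t * Dm t" if act: "u k t = Dm t" for k
    proof (cases "fst k = snd k")
      case True
      then have "U' k = 0" "Dm t = 0" using act by (auto simp: U'_def u_def)
      then show ?thesis by simp
    next
      case False
      define p where "p = fst k"
      define q where "q = snd k"
      have pq: "p \<noteq> q" using False by (simp add: p_def q_def)
      have mx: "\<phi> t k' - \<theta> t k' \<le> \<phi> t p - \<theta> t p" for k'
        using Dm_ge[of "(k', q)" t] act by (simp add: u_def \<delta>_def p_def q_def)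
      have mn: "\<phi> t q - \<theta> t q \<le> \<phi> t k' - \<theta> t k'" for k'
        using Dm_ge[of "(p, k')" t] act by (simp add: u_def \<delta>_def p_def q_def)
      have "U' k = (\<Sum>j\<in>UNIV. a p j t * (sin (\<phi> t j - \<phi> t p) - sin (\<theta> t j - \<theta> t p)))
                 - (\<Sum>j\<in>UNIV. a q j t * (sin (\<phi> t j - \<phi> t q) - sin (\<theta> t j - \<theta> t q)))"
        by (simp add: U'_def F\<phi>_def F\<theta>_def p_def q_def right_diff_distrib sum_subtractf)
      also have "\<dots> \<le> - Sfun a r p q t * ((\<phi> t p - \<theta> t p) - (\<phi> t q - \<theta> t q))"
        unfolding Sfun_def c_r_def a_tilde_def
        by (rule core[where A="\<lambda>i j. a i j t"]) (use a_diag r inA' t0 pq mx mn in auto)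
      also have "\<dots> \<le> xi a r t * ((\<phi> t p - \<theta> t p) - (\<phi> t q - \<theta> t q))"
        using xi_ge[OF pq, of a r t] mx[of q] by (intro mult_right_mono) auto
      also have "(\<phi> t p - \<theta> t p) - (\<phi> t q - \<theta> t q) = Dm t"
        using act by (simp add: u_def \<delta>_def p_def q_def)
      finally show ?thesis .
    qed
    have dD: "dini_ub Dm t (xi a r t * Dm t)"
      unfolding Dm_def
    proof (rule dini_Max)
      fix k :: "'n \<times> 'n"
      show "(u k \<longlongrightarrow> u k t) (at_right t)"
        using DERIV_continuous[OF du[of k]] by (simp add: continuous_within)
      assume "k \<in> UNIV" "u k t = Max ((\<lambda>k. u k t) ` UNIV)"
      then show "dini_ub (u k) t (xi a r t * Max ((\<lambda>k. u k t) ` UNIV))"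
        using U'le[of k] du[of k] by (intro deriv_dini) (auto simp: Dm_def)
    qed auto
    have acont: "continuous (at t within {0..b}) (a i j)" for i j
    proof -
      have "continuous (at t within {0..}) (a i j)"
        using t t0 unfolding C_def Disc_def by auto
      then show ?thesis by (rule continuous_within_subset) auto
    qed
    have xcont: "continuous (at t within {0..b}) (xi a r)"
      by (rule xi_cont[OF ex acont])
    have "(E has_vector_derivative xi a r t) (at t within {0..b} - {})"
      unfolding E_def
      by (rule integral_has_vector_derivative_continuous_at[OF intg[OF b]]) (use t0 xcont in auto)
    then have "(E has_real_derivative xi a r t) (at t within {0..b})"
      by (simp add: has_real_derivative_iff_has_vector_derivative)
    then have "(E has_real_derivative xi a r t) (at t within {t..b})"
      by (rule DERIV_subset) (use t0 in auto)
    then have dE: "(E has_real_derivative xi a r t) (at_right t)"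
      using at_within_Icc_at_right[OF t0(2)] by simp
    have df: "((\<lambda>s. exp (- E s)) has_real_derivative (exp (- E t) * (- xi a r t))) (at_right t)"
      by (intro derivative_intros dE)
    have "dini_ub (\<lambda>s. Dm s * exp (- E s)) t
           (xi a r t * Dm t * exp (- E t) + Dm t * (exp (- E t) * (- xi a r t)))"
      by (rule dini_prod[OF dD df]) simp
    then show ?thesis unfolding g_def by (simp add: algebra_simps)
  qed
  have "g b \<le> g 0" by (rule dini_mono[OF b gcont cC]) (use dini in auto)
  then have "Dm b * exp (- E b) \<le> Dm 0" by (simp add: g_def E_def)
  then have "Dm b * exp (- E b) * exp (E b) \<le> Dm 0 * exp (E b)" by (intro mult_right_mono) auto
  then have "Dm b \<le> Dm 0 * exp (E b)" by (simp add: exp_minus field_simps)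
  then show ?thesis by (simp add: Dm_def u_def \<delta>_def E_def)
qed



theorem theorem2:
  fixes \<omega> :: "'n::finite \<Rightarrow> real \<Rightarrow> real"
    and a :: "'n \<Rightarrow> 'n \<Rightarrow> real \<Rightarrow> real"
    and r :: real
  assumes m2: "CARD('n) \<ge> 2"
    and omega_pc: "\<And>i. piecewise_continuous (\<omega> i)"
    and omega_bd: "\<And>i. bounded_fun (\<omega> i)"
    and a_pc: "\<And>i j. piecewise_continuous (a i j)"
    and a_bd: "\<And>i j. bounded_fun (a i j)"
    and a_diag: "\<And>i t. a i i t = 0"
    and r_range: "0 \<le> r" "r < pi / 2"
    and inv: "Ar_invariant r \<omega> a"
    and avg: "\<exists>T \<eta>. T > 0 \<and> \<eta> > 0 \<and>
               (\<forall>t\<ge>0. (1 / T) * integral {t..t+T} (\<lambda>s. xi a r s) \<le> - \<eta>)"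
  shows "PD_exp_stable r \<omega> a"
proof -
  obtain T \<eta> where T: "T > 0" and eta: "\<eta> > 0"
    and av: "\<forall>t\<ge>0. (1 / T) * integral {t..t+T} (xi a r) \<le> - \<eta>"
    using avg by auto
  have ex: "\<exists>p q::'n. p \<noteq> q"
  proof (rule ccontr)
    assume "\<not> (\<exists>p q::'n. p \<noteq> q)"
    then have "card (UNIV :: 'n set) \<le> Suc 0" by (subst card_le_Suc0_iff_eq) auto
    then show False using m2 by simp
  qed
  have "\<forall>k::'n \<times> 'n. \<exists>B. \<forall>t\<ge>0. \<bar>a (fst k) (snd k) t\<bar> \<le> B"
    using a_bd unfolding bounded_fun_def by blast
  then obtain Bf where Bf: "\<And>k t. t \<ge> 0 \<Longrightarrow> \<bar>a (fst k) (snd k) t\<bar> \<le> Bf k"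
    by metis
  define K where "K = (\<Sum>i\<in>UNIV. \<Sum>k\<in>UNIV. \<bar>Bf (i, k)\<bar>)"
  have K0: "K \<ge> 0" unfolding K_def by (intro sum_nonneg) auto
  have Ksum: "(\<Sum>k\<in>UNIV. \<bar>a i k t\<bar>) \<le> K" if t: "t \<ge> 0" for i t
  proof -
    have "(\<Sum>k\<in>UNIV. \<bar>a i k t\<bar>) \<le> (\<Sum>k\<in>UNIV. \<bar>Bf (i, k)\<bar>)"
    proof (rule sum_mono)
      fix k
      show "\<bar>a i k t\<bar> \<le> \<bar>Bf (i, k)\<bar>" using Bf[where k="(i, k)" and t=t] t by force
    qed
    also have "\<dots> \<le> K" unfolding K_def
      by (rule member_le_sum[of i UNIV "\<lambda>i. \<Sum>k\<in>UNIV. \<bar>Bf (i, k)\<bar>"]) (auto intro: sum_nonneg)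
    finally show ?thesis .
  qed
  have xiB: "xi a r t \<le> 4 * K" if "t \<ge> 0" for t
    by (rule xi_upper[OF ex r_range]) (use Ksum that in auto)
  have intg: "\<And>t. t \<ge> 0 \<Longrightarrow> xi a r integrable_on {0..t}"
    and Ebd: "\<And>t. t \<ge> 0 \<Longrightarrow> integral {0..t} (xi a r) \<le> - \<eta> * t + (\<eta> + 4 * K) * T"
    using integral_facts[OF T eta av xiB] K0 by auto
  define M where "M = exp ((\<eta> + 4 * K) * T)"
  have main: "\<bar>(\<phi> t i - \<phi> t j) - (\<theta> t i - \<theta> t j)\<bar>
                \<le> M * Max {\<bar>(\<phi> 0 k - \<phi> 0 l) - (\<theta> 0 k - \<theta> 0 l)\<bar> | k l. True} * exp (- \<eta> * t)"
    if s\<phi>: "tvkr_solution \<omega> a \<phi>" and s\<theta>: "tvkr_solution \<omega> a \<theta>"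
      and i\<phi>: "in_Ar r (\<phi> 0)" and i\<theta>: "in_Ar r (\<theta> 0)" and t: "t \<ge> 0" for \<phi> \<theta> t i j
  proof -
    define Dm where "Dm s = Max ((\<lambda>k. (\<phi> s (fst k) - \<theta> s (fst k)) - (\<phi> s (snd k) - \<theta> s (snd k))) ` UNIV)" for s
    define M0 where "M0 = Max {\<bar>(\<phi> 0 k - \<phi> 0 l) - (\<theta> 0 k - \<theta> 0 l)\<bar> | k l. True}"
    have Db: "Dm t \<le> Dm 0 * exp (integral {0..t} (xi a r))"
      unfolding Dm_def by (rule D_bound[OF ex a_pc a_diag r_range inv intg s\<phi> s\<theta> i\<phi> i\<theta> t])
    have Dge: "(\<phi> s k - \<theta> s k) - (\<phi> s l - \<theta> s l) \<le> Dm s" for s k l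
      unfolding Dm_def by (rule Max_ge) (auto intro: image_eqI[where x="(k, l)"])
    have D00: "0 \<le> Dm 0" using Dge[of 0 i i] by simp
    have setEq: "{\<bar>(\<phi> 0 k - \<phi> 0 l) - (\<theta> 0 k - \<theta> 0 l)\<bar> | k l. True}
         = (\<lambda>k. \<bar>(\<phi> 0 (fst k) - \<phi> 0 (snd k)) - (\<theta> 0 (fst k) - \<theta> 0 (snd k))\<bar>) ` UNIV"
    proof (intro equalityI subsetI)
      fix x assume "x \<in> {\<bar>(\<phi> 0 k - \<phi> 0 l) - (\<theta> 0 k - \<theta> 0 l)\<bar> | k l. True}"
      then obtain k l where "x = \<bar>(\<phi> 0 k - \<phi> 0 l) - (\<theta> 0 k - \<theta> 0 l)\<bar>" by blast
      then show "x \<in> (\<lambda>k. \<bar>(\<phi> 0 (fst k) - \<phi> 0 (snd k)) - (\<theta> 0 (fst k) - \<theta> 0 (snd k))\<bar>) ` UNIV"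
        by (intro image_eqI[where x="(k, l)"]) auto
    qed auto
    have finM: "finite {\<bar>(\<phi> 0 k - \<phi> 0 l) - (\<theta> 0 k - \<theta> 0 l)\<bar> | k l. True}"
      unfolding setEq by simp
    have D0M: "Dm 0 \<le> M0"
      unfolding Dm_def
    proof (rule Max.boundedI)
      fix x assume "x \<in> (\<lambda>k. (\<phi> 0 (fst k) - \<theta> 0 (fst k)) - (\<phi> 0 (snd k) - \<theta> 0 (snd k))) ` UNIV"
      then obtain k l where x: "x = (\<phi> 0 k - \<theta> 0 k) - (\<phi> 0 l - \<theta> 0 l)" by auto
      have "\<bar>(\<phi> 0 k - \<phi> 0 l) - (\<theta> 0 k - \<theta> 0 l)\<bar> \<le> M0"
        unfolding M0_def by (rule Max_ge[OF finM]) blast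
      then show "x \<le> M0" using x by (simp add: abs_if split: if_splits)
    qed auto
    have "\<bar>(\<phi> t i - \<phi> t j) - (\<theta> t i - \<theta> t j)\<bar> \<le> Dm t"
      using Dge[of t i j] Dge[of t j i] by (simp add: abs_if)
    also have "\<dots> \<le> Dm 0 * exp (integral {0..t} (xi a r))" by (rule Db)
    also have "\<dots> \<le> M0 * exp (- \<eta> * t + (\<eta> + 4 * K) * T)"
      using D0M D00 Ebd[OF t] by (intro mult_mono) auto
    also have "\<dots> = M * M0 * exp (- \<eta> * t)"
    proof -
      have "exp (- \<eta> * t + (\<eta> + 4 * K) * T) = exp ((\<eta> + 4 * K) * T) * exp (- \<eta> * t)"
        by (simp add: exp_add[symmetric] algebra_simps)
      then show ?thesis by (simp add: M_def)
    qed
    finally show ?thesis by (simp add: M0_def)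
  qed
  have Mpos: "M > 0" by (simp add: M_def)
  show ?thesis
    unfolding PD_exp_stable_def
    apply (rule exI[of _ M], rule exI[of _ 1], rule exI[of _ \<eta>])
    using Mpos eta main by force
qed


end
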